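(* Let $\Delta t_n>0$, $\mathbf u^{n-1}\in W^{\rm en}_{\mathcal D}$, and let $\mathbf u^n\in W^{\rm ad}_{\mathcal D}$ be a solution of the scheme $$\int_\Omega\pi_{\mathcal D}\mathbf u^n\pi_{\mathcal D}\mathbf v\,dx+\Delta t_n\sum_{K\in\mathcal M}\boldsymbol\delta_K\mathbf h(\mathbf u^n)\cdot\mathbf B_K(\mathbf u^n)\boldsymbol\delta_K\mathbf v=\int_\Omega\pi_{\mathcal D}\mathbf u^{n-1}\pi_{\mathcal D}\mathbf v\,dx\quad\forall\mathbf v\in W_{\mathcal D}.$$ Then $$\mathcal E_{\mathcal D}(\mathbf u^n)+\Delta t_n\sum_{K\in\mathcal M}\boldsymbol\delta_K\mathbf h(\mathbf u^n)\cdot\mathbf B_K(\mathbf u^n)\boldsymbol\delta_K\mathbf h(\mathbf u^n)\le\mathcal E_{\mathcal D}(\mathbf u^{n-1}).$$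
   Context: Continuous data: $\Omega\subset\mathbb R^d$ ($d\in\{2,3\}$) connected bounded open polyhedral. (A1) $\eta:\mathbb R_+\to\mathbb R_+$ continuous, $\eta(0)=0$, $\eta>0$ on $u\ne0$, nondecreasing on $\mathbb R_+$, extended evenly. (A2) $p\in L^1_{loc}(\mathbb R_+)$ absolutely continuous, increasing on $(0,\infty)$, $p(u)\to+\infty$ as $u\to\infty$; if $p(0)=\lim_{u\downarrow0}p(u)$ is finite, $p(u)=2p(0)-p(-u)$ for $u\le0$; $I_p=(0,\infty)$ if $p(0)=-\infty$, else $\mathbb R$; $\sqrt\eta p'\in L^1_{loc}(\mathbb R_+)$, $\sqrt{\eta(u)}p(u)\to0$ as $u\downarrow0$. (A3) $\Lambda$ measurable, symmetric, uniformly elliptic and bounded. (A4) $\Gamma(u)=\int_1^u(p(a)-p(1))da$ on $\bar I_p$ ($+\infty$ for $u<0$ if $p(0)=-\infty$). (A5) $V$ Lipschitz. Mesh: cells $\mathcal M$ (disjoint open polyhedra covering $\bar\Omega$, star-shaped w.r.t. $x_K$), vertices $\mathcal V$ at $x_s$, $\mathcal V_K$, $\mathcal M_s$ as usual, simplicial submesh $\mathcal T$ (each cell split into simplices with apex $x_K$), $W_{\mathcal D}=\{\mathbf v=(v_K,v_s)\}$; $\pi_{\mathcal T}\mathbf v$ the continuous piecewise affine interpolant on $\mathcal T$ (values $v_K$ at $x_K$, $v_s$ at $x_s$, and at face centers $x_\sigma=\sum\beta_{\sigma,s}x_s$ when $d=3$ the value $\sum\beta_{\sigma,s}v_s$); $\nabla_{\mathcal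 T}=\nabla\pi_{\mathcal T}$; $\mathbf e_\beta$ unit vectors. Mass lumping: $\alpha_{K,s}\ge0$, $\sum_s\alpha_{K,s}\le1$, $m_{K,s}=\alpha_{K,s}|K|$, $m_s=\sum_{K\in\mathcal M_s}m_{K,s}$, $m_K=|K|-\sum_sm_{K,s}$, disjoint $\omega_K,\omega_{K,s}\subset K$ covering $K$ up to null sets with these measures, $\omega_s=\bigcup_K\omega_{K,s}$, $\pi_{\mathcal D}\mathbf v=\sum v_K\mathbf 1_{\omega_K}+\sum v_s\mathbf 1_{\omega_s}$. $a^K_{s,s'}=\int_K\Lambda\nabla_{\mathcal T}\mathbf e_s\cdot\nabla_{\mathcal T}\mathbf e_{s'}$, $\mathbf A_K=(a^K_{s,s'})_{s,s'\in\mathcal V_K}$, $\boldsymbol\delta_K\mathbf v=(v_K-v_s)_{s\in\mathcal V_K}$. Scheme: $\mathbf V=(V(x_K),V(x_s))$; $W^{\rm ad}_{\mathcal D}=\{\mathbf v:v_\nu\in I_p\ \forall\nu\}$; $\mathcal E_{\mathcal D}(\mathbf v)=\int_\Omega(\Gamma(\pi_{\mathcal D}\mathbf v)+\pi_{\mathcal D}\mathbf v\pi_{\mathcal D}\mathbf V)$; $W^{\rm en}_{\mathcal D}=\{\mathcal E_{\mathcal D}<\infty\}$; $\mathbf h(\mathbf u)=(p(u_\nu)+V_\nu)_{\nu\in\mathcal M\cup\mathcal V}$; $\eta_{K,s}(\mathbf u)=(\eta(u_K)+\eta(u_s))/2$; $\mathbf M_K(\mathbf u)=\operatorname{diag}(\sqrt{\eta_{K,s}(\mathbf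 u)})_{s\in\mathcal V_K}$; $\mathbf B_K(\mathbf u)=\mathbf M_K(\mathbf u)\mathbf A_K\mathbf M_K(\mathbf u)$. *)

theory Defs
  imports "HOL-Analysis.Analysis"
begin

definition polyhedral_open :: "'a::euclidean_space set \<Rightarrow> bool" where
  "polyhedral_open S \<longleftrightarrow> open S \<and>
     (\<exists>F. finite F \<and> (\<forall>P\<in>F. polytope P) \<and> S = interior (\<Union>F))"

definition abs_continuous_on :: "real set \<Rightarrow> (real \<Rightarrow> real) \<Rightarrow> bool" where
  "abs_continuous_on S f \<longleftrightarrow>
     (\<forall>\<epsilon>>0. \<exists>\<delta>>0. \<forall>(n::nat) (a::nat\<Rightarrow>real) b.
        (\<forall>i<n. a i \<in> S \<and> b i \<in> S \<and> a i \<le> b i) \<longrightarrow>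
        (\<forall>i<n. \<forall>j<n. i \<noteq> j \<longrightarrow> {a i<..<b i} \<inter> {a j<..<b j} = {}) \<longrightarrow>
        (\<Sum>i<n. b i - a i) < \<delta> \<longrightarrow> (\<Sum>i<n. \<bar>f (b i) - f (a i)\<bar>) < \<epsilon>)"

definition p_zero_infinite :: "(real \<Rightarrow> real) \<Rightarrow> bool" where
  "p_zero_infinite p \<longleftrightarrow> filterlim p at_bot (at_right 0)"

definition Ip :: "(real \<Rightarrow> real) \<Rightarrow> real set" where
  "Ip p = (if p_zero_infinite p then {0<..} else UNIV)"

definition Gamma :: "(real \<Rightarrow> real) \<Rightarrow> real \<Rightarrow> ereal" where
  "Gamma p u = (if u \<in> closure (Ip p)
      then ereal (interval_lebesgue_integral lborel (ereal 1) (ereal u) (\<lambda>a. p a - p 1))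
      else \<infinity>)"

text \<open>Degrees of freedom: cell unknowns Inl K, vertex unknowns Inr s.
  A vector v in W_D is a function on these indices.\<close>

definition Ms :: "'c set \<Rightarrow> ('c \<Rightarrow> 'v set) \<Rightarrow> 'v \<Rightarrow> 'c set" where
  "Ms M VK s = {K\<in>M. s \<in> VK K}"

definition omega_s ::
  "'c set \<Rightarrow> ('c \<Rightarrow> 'v set) \<Rightarrow> ('c \<Rightarrow> 'v \<Rightarrow> 'a set) \<Rightarrow> 'v \<Rightarrow> 'a set" where
  "omega_s M VK omKs s = (\<Union>K\<in>Ms M VK s. omKs K s)"

definition piD ::
  "'c set \<Rightarrow> 'v set \<Rightarrow> ('c \<Rightarrow> 'v set) \<Rightarrow> ('c \<Rightarrow> 'a set) \<Rightarrow> ('c \<Rightarrow> 'v \<Rightarrow> 'a set)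
    \<Rightarrow> ('c + 'v \<Rightarrow> real) \<Rightarrow> 'a \<Rightarrow> real" where
  "piD M Vs VK omK omKs v x =
     (\<Sum>K\<in>M. v (Inl K) * indicator (omK K) x) +
     (\<Sum>s\<in>Vs. v (Inr s) * indicator (omega_s M VK omKs s) x)"

definition energyD ::
  "(real \<Rightarrow> real) \<Rightarrow> 'a::euclidean_space set \<Rightarrow> (('c + 'v \<Rightarrow> real) \<Rightarrow> 'a \<Rightarrow> real)
    \<Rightarrow> ('c + 'v \<Rightarrow> real) \<Rightarrow> ('c + 'v \<Rightarrow> real) \<Rightarrow> ereal" where
  "energyD p \<Omega> recon VV v =
     enn2ereal (\<integral>\<^sup>+ x. e2ennreal (Gamma p (recon v x)) * indicator \<Omega> x \<partial>lebesgue)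
     + ereal (set_lebesgue_integral lebesgue \<Omega> (\<lambda>x. recon v x * recon VV x))"

definition hvec :: "(real \<Rightarrow> real) \<Rightarrow> ('c + 'v \<Rightarrow> real) \<Rightarrow> ('c + 'v \<Rightarrow> real) \<Rightarrow> ('c + 'v \<Rightarrow> real)" where
  "hvec p VV u = (\<lambda>\<nu>. p (u \<nu>) + VV \<nu>)"

definition deltaK :: "('c + 'v \<Rightarrow> real) \<Rightarrow> 'c \<Rightarrow> 'v \<Rightarrow> real" where
  "deltaK v K s = v (Inl K) - v (Inr s)"

definition etaKs :: "(real \<Rightarrow> real) \<Rightarrow> ('c + 'v \<Rightarrow> real) \<Rightarrow> 'c \<Rightarrow> 'v \<Rightarrow> real" where
  "etaKs \<eta> u K s = (\<eta> (u (Inl K)) + \<eta> (u (Inr s))) / 2"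

text \<open>x . B_K(u) y with B_K(u) = M_K(u) A_K M_K(u), M_K(u) = diag(sqrt eta_{K,s}(u)).\<close>
definition BK_form ::
  "('c \<Rightarrow> 'v set) \<Rightarrow> ('c \<Rightarrow> 'v \<Rightarrow> 'v \<Rightarrow> real) \<Rightarrow> (real \<Rightarrow> real) \<Rightarrow> ('c + 'v \<Rightarrow> real)
     \<Rightarrow> 'c \<Rightarrow> ('v \<Rightarrow> real) \<Rightarrow> ('v \<Rightarrow> real) \<Rightarrow> real" where
  "BK_form VK a \<eta> u K x y =
     (\<Sum>s\<in>VK K. \<Sum>s'\<in>VK K.
        x s * (sqrt (etaKs \<eta> u K s) * a K s s' * sqrt (etaKs \<eta> u K s')) * y s')"

end

theory Submission
  imports Defs
begin

lemma p_mono_fin: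
  fixes p :: "real \<Rightarrow> real"
  assumes p_incr: "strict_mono_on {0<..} p"
    and lim: "(p \<longlongrightarrow> p 0) (at_right 0)" and prefl: "\<forall>u\<le>0. p u = 2 * p 0 - p (- u)"
  shows "mono p"
proof -
  have L1: "p 0 \<le> p y" if "y > 0" for y
  proof (rule tendsto_upperbound[OF lim])
    show "\<forall>\<^sub>F i in at_right 0. p i \<le> p y"
      unfolding eventually_at_right_field using that
      by (intro exI[of _ y]) (auto intro!: less_imp_le strict_mono_onD[OF p_incr])
  qed simp
  have L2: "p 0 \<le> p y" if "y \<ge> 0" for y
    using L1[of y] that by (cases "y = 0") auto
  show ?thesis
  proof (rule monoI)
    fix x y :: real assume xy: "x \<le> y"
    show "p x \<le> p y"
    proof (cases "x > 0")
      case True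
      show ?thesis
      proof (cases "x = y")
        case False
        have "x \<in> {0<..}" "y \<in> {0<..}" "x < y" using True xy False by auto
        then have "p x < p y" by (rule strict_mono_onD[OF p_incr])
        then show ?thesis by simp
      qed simp
    next
      case False
      then have px: "p x = 2 * p 0 - p (- x)" using prefl[rule_format, of x] by linarith
      show ?thesis
      proof (cases "y > 0")
        case True
        have "p 0 \<le> p (- x)" using L2[of "-x"] False by simp
        then show ?thesis using px L1[OF True] by linarith
      next
        case F2: False
        then have py: "p y = 2 * p 0 - p (- y)" using prefl[rule_format, of y] by linarith
        have "p (- y) \<le> p (- x)"
        proof (cases "- y > 0")
          case T3: True
          show ?thesis
          proof (cases "x = y")
            case False
            have "-y \<in> {0<..}" "-x \<in> {0<..}" "-y < -x" using T3 xy False by auto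
            then have "p (-y) < p (-x)" by (rule strict_mono_onD[OF p_incr])
            then show ?thesis by simp
          qed simp
        next
          case False then have "y = 0" using F2 by auto
          then show ?thesis using L2[of "-x"] xy by simp
        qed
        then show ?thesis using px py by auto
      qed
    qed
  qed
qed

lemma interval_integrable_sub:
  fixes f :: "real \<Rightarrow> real"
  assumes int: "interval_lebesgue_integrable lborel (ereal lo) (ereal hi) f"
    and "lo \<le> c" "c \<le> hi" "lo \<le> d" "d \<le> hi"
  shows "interval_lebesgue_integrable lborel (ereal c) (ereal d) f"
proof -
  have *: "interval_lebesgue_integrable lborel (ereal c) (ereal d) f"
    if "lo \<le> c" "c \<le> d" "d \<le> hi" for c d
  proof -
    have "set_integrable lborel {lo<..<hi} f"
      using int that by (simp add: interval_lebesgue_integrable_def)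
    then have "set_integrable lborel {c<..<d} f"
      by (rule set_integrable_subset) (use that in auto)
    then show ?thesis using that by (simp add: interval_lebesgue_integrable_def)
  qed
  show ?thesis
  proof (cases "c \<le> d")
    case True then show ?thesis using * assms by auto
  next
    case False then show ?thesis using *[of d c] assms
      by (subst interval_integrable_endpoints_reverse) auto
  qed
qed

lemma conv_core:
  fixes p :: "real \<Rightarrow> real"
  assumes int: "interval_lebesgue_integrable lborel (ereal lo) (ereal hi) p"
    and lo: "lo \<le> min a (min 1 b)" and hi: "max a (max 1 b) \<le> hi"
    and m1: "\<And>t. a < t \<Longrightarrow> t < b \<Longrightarrow> p a \<le> p t"
    and m2: "\<And>t. b < t \<Longrightarrow> t < a \<Longrightarrow> p t \<le> p a"
  shows "(LBINT t=ereal 1..ereal a. (p t - p 1)) + (p a - p 1) * (b - a)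
           \<le> (LBINT t=ereal 1..ereal b. (p t - p 1))"
proof -
  have I: "interval_lebesgue_integrable lborel (ereal c) (ereal d) p"
    if "lo \<le> c" "c \<le> hi" "lo \<le> d" "d \<le> hi" for c d
    using interval_integrable_sub[OF int that] .
  have If: "interval_lebesgue_integrable lborel (ereal c) (ereal d) (\<lambda>t. p t - k)"
    if "lo \<le> c" "c \<le> hi" "lo \<le> d" "d \<le> hi" for c d k
    using I[OF that] by (intro interval_lebesgue_integral_diff(1)) auto
  have "(LBINT t=ereal 1..ereal a. (p t - p 1)) + (LBINT t=ereal a..ereal b. (p t - p 1))
        = (LBINT t=ereal 1..ereal b. (p t - p 1))"
  proof (rule interval_integral_sum)
    have "min (ereal 1) (min (ereal a) (ereal b)) = ereal (min 1 (min a b))"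
         "max (ereal 1) (max (ereal a) (ereal b)) = ereal (max 1 (max a b))" by auto
    then show "interval_lebesgue_integrable lborel (min (ereal 1) (min (ereal a) (ereal b)))
       (max (ereal 1) (max (ereal a) (ereal b))) (\<lambda>t. p t - p 1)"
      using lo hi by (simp only:) (rule If, auto)
  qed
  moreover have "(LBINT t=ereal a..ereal b. (p t - p 1))
      = (LBINT t=ereal a..ereal b. (p t - p a)) + (p a - p 1) * (b - a)"
  proof -
    have "(LBINT t=ereal a..ereal b. (p t - p 1)) = (LBINT t=ereal a..ereal b. ((p t - p a) + (p a - p 1)))"
      by simp
    also have "\<dots> = (LBINT t=ereal a..ereal b. (p t - p a)) + (LBINT t=ereal a..ereal b. (p a - p 1))"
      by (rule interval_lebesgue_integral_add(2)) (use If lo hi in auto)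
    finally show ?thesis by simp
  qed
  moreover have "0 \<le> (LBINT t=ereal a..ereal b. (p t - p a))"
  proof (cases "a \<le> b")
    case True
    have "0 \<le> integral\<^sup>L lborel (\<lambda>t. indicator {a<..<b} t *\<^sub>R (p t - p a))"
      by (rule integral_nonneg_AE) (auto intro!: AE_I2 m1 split: split_indicator)
    then show ?thesis using True by (simp add: interval_lebesgue_integral_le_eq set_lebesgue_integral_def)
  next
    case False
    have "0 \<le> integral\<^sup>L lborel (\<lambda>t. - (indicator {b<..<a} t *\<^sub>R (p t - p a)))"
      by (rule integral_nonneg_AE) (auto intro!: AE_I2 m2 split: split_indicator)
    then show ?thesis using False by (simp add: interval_lebesgue_integral_gt_eq set_lebesgue_integral_def)
  qed
  ultimately show ?thesis by linarith
qed

lemma gamma_conv: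
  fixes p :: "real \<Rightarrow> real"
  assumes p_L1loc: "\<And>b. b > 0 \<Longrightarrow> set_integrable lborel {0..b} p"
    and p_incr: "strict_mono_on {0<..} p"
    and p_refl: "\<not> p_zero_infinite p \<Longrightarrow>
                   (p \<longlongrightarrow> p 0) (at_right 0) \<and> (\<forall>u\<le>0. p u = 2 * p 0 - p (- u))"
    and a: "a \<in> Ip p" and b: "b \<in> closure (Ip p)"
  shows "(LBINT t=ereal 1..ereal a. (p t - p 1)) + (p a - p 1) * (b - a)
           \<le> (LBINT t=ereal 1..ereal b. (p t - p 1))"
proof (cases "p_zero_infinite p")
  case True
  then have a0: "a > 0" and b0: "b \<ge> 0" using a b by (auto simp: Ip_def)
  define hi where "hi = max a (max 1 b)"
  have "set_integrable lborel {0..hi} p" using p_L1loc[of hi] by (auto simp: hi_def)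
  then have "set_integrable lborel {0<..<hi} p"
    by (rule set_integrable_subset) auto
  then have int: "interval_lebesgue_integrable lborel (ereal 0) (ereal hi) p"
  proof -
    have "0 \<le> hi" by (auto simp: hi_def)
    then show ?thesis using \<open>set_integrable lborel {0<..<hi} p\<close>
      by (simp add: interval_lebesgue_integrable_def)
  qed
  show ?thesis
  proof (rule conv_core[OF int])
    show "0 \<le> min a (min 1 b)" "max a (max 1 b) \<le> hi" using a0 b0 by (auto simp: hi_def)
    show "p a \<le> p t" if "a < t" "t < b" for t
    proof -
      have "a \<in> {0<..}" "t \<in> {0<..}" "a < t" using that a0 by auto
      then have "p a < p t" by (rule strict_mono_onD[OF p_incr])
      then show ?thesis by simp
    qed
    show "p t \<le> p a" if "b < t" "t < a" for t
    proof -
      have "t \<in> {0<..}" "a \<in> {0<..}" "t < a" using that b0 by auto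
      then have "p t < p a" by (rule strict_mono_onD[OF p_incr])
      then show ?thesis by simp
    qed
  qed
next
  case False
  have mono: "mono p" using p_refl[OF False]
    by (intro p_mono_fin[OF p_incr]) (erule conjunct1, erule conjunct2)
  define lo where "lo = min a (min 1 b)"
  define hi where "hi = max a (max 1 b)"
  have lohi: "lo \<le> hi" by (auto simp: lo_def hi_def)
  have pm: "p \<in> borel_measurable borel" using mono by (rule borel_measurable_mono)
  have "integrable lborel (\<lambda>x. indicator {lo<..<hi} x *\<^sub>R p x)"
  proof (rule integrableI_bounded_set[where A="{lo<..<hi}" and B="max \<bar>p lo\<bar> \<bar>p hi\<bar>"])
    show "(\<lambda>x. indicator {lo<..<hi} x *\<^sub>R p x) \<in> borel_measurable lborel"
      using pm by measurable
    show "AE x in lborel. x \<in> {lo<..<hi} \<longrightarrow> norm (indicator {lo<..<hi} x *\<^sub>R p x) \<le> max \<bar>p lo\<bar> \<bar>p hi\<bar>"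
    proof (rule AE_I2, rule impI)
      fix x assume "x \<in> {lo<..<hi}"
      then have "p lo \<le> p x" "p x \<le> p hi" using mono by (auto simp: mono_def)
      then show "norm (indicator {lo<..<hi} x *\<^sub>R p x) \<le> max \<bar>p lo\<bar> \<bar>p hi\<bar>"
        using \<open>x \<in> {lo<..<hi}\<close> by auto
    qed
  qed (use lohi in auto)
  then have int: "interval_lebesgue_integrable lborel (ereal lo) (ereal hi) p"
    using lohi by (simp add: interval_lebesgue_integrable_def set_integrable_def)
  show ?thesis
  proof (rule conv_core[OF int])
    show "lo \<le> min a (min 1 b)" "max a (max 1 b) \<le> hi" by (auto simp: lo_def hi_def)
    show "p a \<le> p t" if "a < t" "t < b" for t using mono that by (auto simp: mono_def)
    show "p t \<le> p a" if "b < t" "t < a" for t using mono that by (auto simp: mono_def)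
  qed
qed

lemma piece:
  fixes M :: "'c set" and Vs :: "'v set" and cell :: "'c \<Rightarrow> 'a set"
  assumes M_fin: "finite M" and Vs_fin: "finite Vs"
    and cell_disj: "\<And>K L. K \<in> M \<Longrightarrow> L \<in> M \<Longrightarrow> K \<noteq> L \<Longrightarrow> cell K \<inter> cell L = {}"
    and omK_sub: "\<And>K. K \<in> M \<Longrightarrow> omK K \<subseteq> cell K"
    and omKs_sub: "\<And>K s. K \<in> M \<Longrightarrow> s \<in> VK K \<Longrightarrow> omKs K s \<subseteq> cell K"
    and om_disj1: "\<And>K s. K \<in> M \<Longrightarrow> s \<in> VK K \<Longrightarrow> omK K \<inter> omKs K s = {}"
    and om_disj2: "\<And>K s s'. K \<in> M \<Longrightarrow> s \<in> VK K \<Longrightarrow> s' \<in> VK K \<Longrightarrow> s \<noteq> s'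
                     \<Longrightarrow> omKs K s \<inter> omKs K s' = {}"
  shows "(\<forall>v. piD M Vs VK omK omKs v x = 0) \<or>
         (\<exists>\<nu>. (\<nu> \<in> Inl ` M \<or> \<nu> \<in> Inr ` Vs) \<and> (\<forall>v. piD M Vs VK omK omKs v x = v \<nu>))"
proof (cases "\<exists>K\<in>M. x \<in> omK K")
  case True
  then obtain K where K: "K \<in> M" "x \<in> omK K" by blast
  have xc: "x \<in> cell K" using K omK_sub by blast
  have n1: "x \<notin> omK L" if "L \<in> M" "L \<noteq> K" for L
    using cell_disj[OF that(1) K(1) that(2)] omK_sub[OF that(1)] xc by blast
  have n2: "x \<notin> omega_s M VK omKs s" for s
  proof
    assume "x \<in> omega_s M VK omKs s"
    then obtain L where L: "L \<in> M" "s \<in> VK L" "x \<in> omKs L s"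
      by (auto simp: omega_s_def Ms_def)
    show False
    proof (cases "L = K")
      case True then show False using om_disj1[OF K(1)] L K by blast
    next
      case False
      then show False using cell_disj[OF L(1) K(1) False] omKs_sub[OF L(1,2)] L(3) xc by blast
    qed
  qed
  have "piD M Vs VK omK omKs v x = v (Inl K)" for v
  proof -
    have "(\<Sum>L\<in>M. v (Inl L) * indicator (omK L) x) = v (Inl K) * indicator (omK K) x
            + (\<Sum>L\<in>M - {K}. v (Inl L) * indicator (omK L) x)"
      by (rule sum.remove[OF M_fin K(1)])
    also have "(\<Sum>L\<in>M - {K}. v (Inl L) * indicator (omK L) x) = 0"
      by (rule sum.neutral) (auto simp: n1)
    finally have 1: "(\<Sum>L\<in>M. v (Inl L) * indicator (omK L) x) = v (Inl K)" using K by simp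
    have 2: "(\<Sum>s\<in>Vs. v (Inr s) * indicator (omega_s M VK omKs s) x) = 0"
      by (rule sum.neutral) (auto simp: n2)
    show ?thesis unfolding piD_def 1 2 by simp
  qed
  then show ?thesis using K by blast
next
  case F1: False
  show ?thesis
  proof (cases "\<exists>s\<in>Vs. x \<in> omega_s M VK omKs s")
    case True
    then obtain s where s: "s \<in> Vs" "x \<in> omega_s M VK omKs s" by blast
    then obtain K where K: "K \<in> M" "s \<in> VK K" "x \<in> omKs K s"
      by (auto simp: omega_s_def Ms_def)
    have n2: "x \<notin> omega_s M VK omKs s'" if "s' \<noteq> s" for s'
    proof
      assume "x \<in> omega_s M VK omKs s'"
      then obtain L where L: "L \<in> M" "s' \<in> VK L" "x \<in> omKs L s'"
        by (auto simp: omega_s_def Ms_def)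
      show False
      proof (cases "L = K")
        case True then show False using om_disj2[OF K(1) K(2), of s'] L K that by blast
      next
        case False
        then show False using cell_disj[OF L(1) K(1) False] omKs_sub[OF L(1,2)] omKs_sub[OF K(1,2)] L(3) K(3) by blast
      qed
    qed
    have "piD M Vs VK omK omKs v x = v (Inr s)" for v
    proof -
      have 1: "(\<Sum>L\<in>M. v (Inl L) * indicator (omK L) x) = 0"
        by (rule sum.neutral) (use F1 in auto)
      have "(\<Sum>s\<in>Vs. v (Inr s) * indicator (omega_s M VK omKs s) x) = v (Inr s) * indicator (omega_s M VK omKs s) x
            + (\<Sum>s'\<in>Vs - {s}. v (Inr s') * indicator (omega_s M VK omKs s') x)"
        by (rule sum.remove[OF Vs_fin s(1)])
      also have "(\<Sum>s'\<in>Vs - {s}. v (Inr s') * indicator (omega_s M VK omKs s') x) = 0"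
        by (rule sum.neutral) (auto simp: n2)
      finally have 2: "(\<Sum>s\<in>Vs. v (Inr s) * indicator (omega_s M VK omKs s) x) = v (Inr s)" using s by simp
      show ?thesis unfolding piD_def 1 2 by simp
    qed
    then show ?thesis using s by blast
  next
    case False
    have "piD M Vs VK omK omKs v x = 0" for v
      unfolding piD_def using F1 False
      by (auto intro!: sum.neutral)
    then show ?thesis by blast
  qed
qed

theorem lemma3p1:
  fixes \<Omega> :: "'a::euclidean_space set"
    and \<eta> p dp :: "real \<Rightarrow> real"
    and V :: "'a \<Rightarrow> real"
    and M :: "'c set" and Vs :: "'v set"
    and cell :: "'c \<Rightarrow> 'a set" and xK :: "'c \<Rightarrow> 'a"
    and xs :: "'v \<Rightarrow> 'a" and VK :: "'c \<Rightarrow> 'v set"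
    and \<alpha> :: "'c \<Rightarrow> 'v \<Rightarrow> real"
    and omK :: "'c \<Rightarrow> 'a set" and omKs :: "'c \<Rightarrow> 'v \<Rightarrow> 'a set"
    and a :: "'c \<Rightarrow> 'v \<Rightarrow> 'v \<Rightarrow> real"
    and dt :: real and u uold :: "'c + 'v \<Rightarrow> real"
  defines "piD' \<equiv> piD M Vs VK omK omKs"
    and "VV \<equiv> (\<lambda>\<nu>. case \<nu> of Inl K \<Rightarrow> V (xK K) | Inr s \<Rightarrow> V (xs s))"
  assumes dim: "DIM('a) = 2 \<or> DIM('a) = 3"
    (* domain *)
    and Omega_poly: "polyhedral_open \<Omega>" and Omega_bdd: "bounded \<Omega>"
    and Omega_conn: "connected \<Omega>"
    (* (A1) *)
    and eta_cont: "continuous_on UNIV \<eta>" and eta_0: "\<eta> 0 = 0"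
    and eta_pos: "\<And>u. u \<noteq> 0 \<Longrightarrow> \<eta> u > 0"
    and eta_mono: "mono_on {0..} \<eta>" and eta_even: "\<And>u. \<eta> (-u) = \<eta> u"
    (* (A2) *)
    and p_L1loc: "\<And>b. b > 0 \<Longrightarrow> set_integrable lborel {0..b} p"
    and p_ac: "\<And>c b. 0 < c \<Longrightarrow> abs_continuous_on {c..b} p"
    and p_incr: "strict_mono_on {0<..} p"
    and p_infty: "filterlim p at_top at_top"
    and p_refl: "\<not> p_zero_infinite p \<Longrightarrow>
                   (p \<longlongrightarrow> p 0) (at_right 0) \<and> (\<forall>u\<le>0. p u = 2 * p 0 - p (- u))"
    and dp: "AE x in lborel. x > 0 \<longrightarrow> (p has_real_derivative dp x) (at x)"
    and eta_dp_L1loc: "\<And>b. b > 0 \<Longrightarrow> set_integrable lborel {0<..b} (\<lambda>x. sqrt (\<eta> x) * dp x)"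
    and eta_p_0: "((\<lambda>x. sqrt (\<eta> x) * p x) \<longlongrightarrow> 0) (at_right 0)"
    (* (A5) *)
    and V_lip: "\<exists>C. C-lipschitz_on UNIV V"
    (* mesh *)
    and M_fin: "finite M" and Vs_fin: "finite Vs"
    and cell_poly: "\<And>K. K \<in> M \<Longrightarrow> polyhedral_open (cell K)"
    and cell_sub: "\<And>K. K \<in> M \<Longrightarrow> cell K \<subseteq> \<Omega>"
    and cell_disj: "\<And>K L. K \<in> M \<Longrightarrow> L \<in> M \<Longrightarrow> K \<noteq> L \<Longrightarrow> cell K \<inter> cell L = {}"
    and cell_cover: "(\<Union>K\<in>M. closure (cell K)) = closure \<Omega>"
    and cell_star: "\<And>K x. K \<in> M \<Longrightarrow> x \<in> cell K \<Longrightarrow> xK K \<in> cell K \<and> closed_segment (xK K) x \<subseteq> cell K"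
    and VK_sub: "\<And>K. K \<in> M \<Longrightarrow> VK K \<subseteq> Vs"
    and VK_vert: "\<And>K s. K \<in> M \<Longrightarrow> s \<in> VK K \<Longrightarrow> xs s \<in> frontier (cell K)"
    (* local matrices A_K: symmetric, positive semidefinite (see NOTES) *)
    and a_sym: "\<And>K s s'. K \<in> M \<Longrightarrow> s \<in> VK K \<Longrightarrow> s' \<in> VK K \<Longrightarrow> a K s s' = a K s' s"
    and a_psd: "\<And>K x. K \<in> M \<Longrightarrow> (\<Sum>s\<in>VK K. \<Sum>s'\<in>VK K. x s * a K s s' * x s') \<ge> 0"
    (* mass lumping *)
    and alpha_nonneg: "\<And>K s. K \<in> M \<Longrightarrow> s \<in> VK K \<Longrightarrow> \<alpha> K s \<ge> 0"
    and alpha_sum: "\<And>K. K \<in> M \<Longrightarrow> (\<Sum>s\<in>VK K. \<alpha> K s) \<le> 1"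
    and omK_meas: "\<And>K. K \<in> M \<Longrightarrow> omK K \<in> sets lebesgue"
    and omKs_meas: "\<And>K s. K \<in> M \<Longrightarrow> s \<in> VK K \<Longrightarrow> omKs K s \<in> sets lebesgue"
    and omK_sub: "\<And>K. K \<in> M \<Longrightarrow> omK K \<subseteq> cell K"
    and omKs_sub: "\<And>K s. K \<in> M \<Longrightarrow> s \<in> VK K \<Longrightarrow> omKs K s \<subseteq> cell K"
    and om_disj1: "\<And>K s. K \<in> M \<Longrightarrow> s \<in> VK K \<Longrightarrow> omK K \<inter> omKs K s = {}"
    and om_disj2: "\<And>K s s'. K \<in> M \<Longrightarrow> s \<in> VK K \<Longrightarrow> s' \<in> VK K \<Longrightarrow> s \<noteq> s'
                     \<Longrightarrow> omKs K s \<inter> omKs K s' = {}"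
    and om_cover: "\<And>K. K \<in> M \<Longrightarrow>
                     cell K - (omK K \<union> (\<Union>s\<in>VK K. omKs K s)) \<in> null_sets lebesgue"
    and omKs_measure: "\<And>K s. K \<in> M \<Longrightarrow> s \<in> VK K \<Longrightarrow>
                     measure lebesgue (omKs K s) = \<alpha> K s * measure lebesgue (cell K)"
    and omK_measure: "\<And>K. K \<in> M \<Longrightarrow>
                     measure lebesgue (omK K) = measure lebesgue (cell K) - (\<Sum>s\<in>VK K. \<alpha> K s * measure lebesgue (cell K))"
    (* the time step *)
    and dt_pos: "dt > 0"
    and uold_en: "energyD p \<Omega> piD' VV uold < \<infinity>"
    and u_ad: "\<And>K. K \<in> M \<Longrightarrow> u (Inl K) \<in> Ip p"
    and u_ad': "\<And>s. s \<in> Vs \<Longrightarrow> u (Inr s) \<in> Ip p"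
    and scheme: "\<And>v. set_lebesgue_integral lebesgue \<Omega> (\<lambda>x. piD' u x * piD' v x)
                   + dt * (\<Sum>K\<in>M. BK_form VK a \<eta> u K (deltaK (hvec p VV u) K) (deltaK v K))
                 = set_lebesgue_integral lebesgue \<Omega> (\<lambda>x. piD' uold x * piD' v x)"
  shows "energyD p \<Omega> piD' VV u
           + ereal (dt * (\<Sum>K\<in>M. BK_form VK a \<eta> u K (deltaK (hvec p VV u) K) (deltaK (hvec p VV u) K)))
         \<le> energyD p \<Omega> piD' VV uold"
proof -
  note pc = piece[where M=M and Vs=Vs and VK=VK and omK=omK and omKs=omKs and cell=cell, OF M_fin Vs_fin cell_disj omK_sub omKs_sub om_disj1 om_disj2]
  let ?A = "piD' u" and ?B = "piD' uold" and ?H = "piD' (hvec p VV u)"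
    and ?C = "piD' (\<lambda>_. 1)" and ?W = "piD' VV"
  let ?G = "\<lambda>b. LBINT t=ereal 1..ereal b. (p t - p 1)"
  have Om_open: "open \<Omega>" using Omega_poly by (simp add: polyhedral_open_def)
  have Om_lm: "\<Omega> \<in> lmeasurable" by (rule lmeasurable_open[OF Omega_bdd Om_open])
  have Om_sets: "\<Omega> \<in> sets lebesgue" using Om_lm by (simp add: fmeasurable_def)
  have Om_fin: "emeasure lebesgue \<Omega> < \<infinity>" using Om_lm unfolding fmeasurable_def by blast
  have sf: "simple_function lebesgue (piD' v)" for v
  proof -
    have m1: "omK K \<in> sets lebesgue" if "K \<in> M" for K using omK_meas that .
    have m2: "omega_s M VK omKs s \<in> sets lebesgue" for s
    proof -
      have "finite (Ms M VK s)" using M_fin by (simp add: Ms_def)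
      then show ?thesis unfolding omega_s_def
        by (intro sets.finite_UN) (auto simp: Ms_def intro: omKs_meas)
    qed
    show ?thesis unfolding piD'_def piD_def
      using m1 m2 by (intro simple_function_add simple_function_sum simple_function_mult
          simple_function_const simple_function_indicator) auto
  qed
  define J where "J = (\<lambda>f. integral\<^sup>L lebesgue (\<lambda>x. indicator \<Omega> x * f x :: real))"
  have intg: "integrable lebesgue (\<lambda>x. indicator \<Omega> x * f x)" if "simple_function lebesgue f" for f :: "'a \<Rightarrow> real"
  proof (rule integrable_simple_function)
    show "simple_function lebesgue (\<lambda>x. indicator \<Omega> x * f x)" using that Om_sets by auto
    have "emeasure lebesgue {y \<in> space lebesgue. indicator \<Omega> y * f y \<noteq> 0} \<le> emeasure lebesgue \<Omega>"
      by (rule emeasure_mono) (auto simp: Om_sets split: split_indicator)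
    then show "emeasure lebesgue {y \<in> space lebesgue. indicator \<Omega> y * f y \<noteq> (0::real)} \<noteq> \<infinity>"
      using Om_fin by auto
  qed
  have Jadd: "J (\<lambda>x. f x + g x) = J f + J g"
    if "simple_function lebesgue f" "simple_function lebesgue g" for f g
    unfolding J_def distrib_left by (rule Bochner_Integration.integral_add[OF intg[OF that(1)] intg[OF that(2)]])
  have Jdiff: "J (\<lambda>x. f x - g x) = J f - J g"
    if "simple_function lebesgue f" "simple_function lebesgue g" for f g
    unfolding J_def right_diff_distrib by (rule Bochner_Integration.integral_diff[OF intg[OF that(1)] intg[OF that(2)]])
  have Jcmul: "J (\<lambda>x. c * f x) = c * J f" for c f
    unfolding J_def by (simp add: mult.left_commute)
  have SJ: "set_lebesgue_integral lebesgue \<Omega> f = J f" for f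
    by (simp add: J_def set_lebesgue_integral_def)
  have zero_cl: "0 \<in> closure (Ip p)" by (auto simp: Ip_def)
  have one_Ip: "1 \<in> Ip p" by (simp add: Ip_def)
  have Ip_cl: "Ip p \<subseteq> closure (Ip p)" by (rule closure_subset)
  have Gnn: "0 \<le> ?G b" if "b \<in> closure (Ip p)" for b
    using gamma_conv[OF p_L1loc p_incr p_refl one_Ip that] by simp
  have Gam: "Gamma p b = ereal (?G b)" if "b \<in> closure (Ip p)" for b
    using that by (simp add: Gamma_def)
  have Gam_inf: "b \<in> closure (Ip p)" if "Gamma p b \<noteq> \<infinity>" for b
    using that by (auto simp: Gamma_def split: if_splits)
  have Acl: "piD' u x \<in> closure (Ip p)" for x
    using pc[where x=x] zero_cl u_ad u_ad' Ip_cl unfolding piD'_def by auto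
  define GA where "GA = (\<lambda>x. real_of_ereal (Gamma p (piD' u x)))"
  define GB where "GB = (\<lambda>x. real_of_ereal (Gamma p (piD' uold x)))"
  have GA_eq: "Gamma p (piD' u x) = ereal (GA x)" "GA x = ?G (piD' u x)" for x
    using Gam[OF Acl[of x]] by (auto simp: GA_def)
  have GA_nn: "0 \<le> GA x" for x using Gnn[OF Acl[of x]] GA_eq(2)[of x] by simp
  have GB_nn: "0 \<le> GB x" for x
  proof (cases "piD' uold x \<in> closure (Ip p)")
    case True then show ?thesis using Gnn[OF True] Gam[OF True] by (simp add: GB_def)
  next
    case False then show ?thesis by (simp add: GB_def Gamma_def)
  qed
  have sfGA: "simple_function lebesgue GA" unfolding GA_def by (rule simple_function_compose1[OF sf])
  have sfGB: "simple_function lebesgue GB" unfolding GB_def by (rule simple_function_compose1[OF sf])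
  have JGA_nn: "0 \<le> J GA" unfolding J_def
    by (intro integral_nonneg_AE AE_I2) (auto simp: GA_nn split: split_indicator)
  have EA: "energyD p \<Omega> piD' VV u = ereal (J GA + J (\<lambda>x. ?A x * ?W x))"
  proof -
    have "(\<integral>\<^sup>+x. e2ennreal (Gamma p (piD' u x)) * indicator \<Omega> x \<partial>lebesgue)
          = (\<integral>\<^sup>+x. ennreal (indicator \<Omega> x * GA x) \<partial>lebesgue)"
      by (intro nn_integral_cong) (auto simp: GA_eq split: split_indicator)
    also have "\<dots> = ennreal (J GA)" unfolding J_def
      by (rule nn_integral_eq_integral[OF intg[OF sfGA]]) (auto intro!: AE_I2 simp: GA_nn split: split_indicator)
    finally show ?thesis using JGA_nn by (simp add: energyD_def SJ)
  qed
  have NB: "(\<integral>\<^sup>+x. e2ennreal (Gamma p (piD' uold x)) * indicator \<Omega> x \<partial>lebesgue) \<noteq> \<infinity>"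
  proof
    assume "(\<integral>\<^sup>+x. e2ennreal (Gamma p (piD' uold x)) * indicator \<Omega> x \<partial>lebesgue) = \<infinity>"
    then have "energyD p \<Omega> piD' VV uold = \<infinity>" by (simp add: energyD_def)
    with uold_en show False by simp
  qed
  have sfF: "simple_function lebesgue (\<lambda>x. e2ennreal (Gamma p (piD' uold x)) * indicator \<Omega> x)"
    by (rule simple_function_compose2[where h="\<lambda>a b. e2ennreal (Gamma p a) * b", OF sf simple_function_indicator[OF Om_sets]])
  have AEfin: "AE x in lebesgue. x \<in> \<Omega> \<longrightarrow> Gamma p (piD' uold x) \<noteq> \<infinity>"
    using nn_integral_PInf_AE[OF borel_measurable_simple_function[OF sfF] NB]
    by (rule AE_mp) (auto intro!: AE_I2)
  have JGB_nn: "0 \<le> J GB" unfolding J_def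
    by (intro integral_nonneg_AE AE_I2) (auto simp: GB_nn split: split_indicator)
  have EB: "energyD p \<Omega> piD' VV uold = ereal (J GB + J (\<lambda>x. ?B x * ?W x))"
  proof -
    have "(\<integral>\<^sup>+x. e2ennreal (Gamma p (piD' uold x)) * indicator \<Omega> x \<partial>lebesgue)
          = (\<integral>\<^sup>+x. ennreal (indicator \<Omega> x * GB x) \<partial>lebesgue)"
      using AEfin
    proof (rule nn_integral_cong_AE[OF AE_mp], intro AE_I2 impI)
      fix x assume h: "x \<in> \<Omega> \<longrightarrow> Gamma p (piD' uold x) \<noteq> \<infinity>"
      show "e2ennreal (Gamma p (piD' uold x)) * indicator \<Omega> x = ennreal (indicator \<Omega> x * GB x)"
      proof (cases "x \<in> \<Omega>")
        case True
        then have "piD' uold x \<in> closure (Ip p)" using h Gam_inf by auto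
        then show ?thesis using True Gam by (simp add: GB_def)
      qed simp
    qed
    also have "\<dots> = ennreal (J GB)" unfolding J_def
      by (rule nn_integral_eq_integral[OF intg[OF sfGB]]) (auto intro!: AE_I2 simp: GB_nn split: split_indicator)
    finally show ?thesis using JGB_nn by (simp add: energyD_def SJ)
  qed
  have conv: "AE x in lebesgue. indicator \<Omega> x * (GA x + (p (?A x) - p 1) * (?B x - ?A x)) \<le> indicator \<Omega> x * GB x"
    using AEfin
  proof (rule AE_mp, intro AE_I2 impI)
    fix x assume h: "x \<in> \<Omega> \<longrightarrow> Gamma p (piD' uold x) \<noteq> \<infinity>"
    show "indicator \<Omega> x * (GA x + (p (?A x) - p 1) * (?B x - ?A x)) \<le> indicator \<Omega> x * GB x"
    proof (cases "x \<in> \<Omega>")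
      case True
      then have bcl: "piD' uold x \<in> closure (Ip p)" using h Gam_inf by auto
      have GBe: "GB x = ?G (piD' uold x)" using Gam[OF bcl] by (simp add: GB_def)
      from pc[where x=x] have "GA x + (p (?A x) - p 1) * (?B x - ?A x) \<le> GB x"
      proof
        assume z: "\<forall>v. piD M Vs VK omK omKs v x = 0"
        then have "piD' u x = 0" "piD' uold x = 0" by (auto simp: piD'_def)
        then show ?thesis by (simp add: GA_def GB_def)
      next
        assume "\<exists>\<nu>. (\<nu> \<in> Inl ` M \<or> \<nu> \<in> Inr ` Vs) \<and> (\<forall>v. piD M Vs VK omK omKs v x = v \<nu>)"
        then obtain \<nu> where nu: "\<nu> \<in> Inl ` M \<or> \<nu> \<in> Inr ` Vs" "\<forall>v. piD M Vs VK omK omKs v x = v \<nu>"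
          by blast
        have uin: "u \<nu> \<in> Ip p" using nu(1) u_ad u_ad' by auto
        have e: "piD' u x = u \<nu>" "piD' uold x = uold \<nu>" using nu(2) by (auto simp: piD'_def)
        show ?thesis
          using gamma_conv[OF p_L1loc p_incr p_refl uin, of "uold \<nu>"] bcl GBe GA_eq(2)[of x] e
          by simp
      qed
      then show ?thesis using True by simp
    qed simp
  qed
  have pid: "(p (?A x) - p 1) * (?B x - ?A x)
      = (?B x * ?H x - ?A x * ?H x) - p 1 * (?B x * ?C x - ?A x * ?C x) - (?B x * ?W x - ?A x * ?W x)" for x
    using pc[where x=x]
  proof
    assume "\<forall>v. piD M Vs VK omK omKs v x = 0"
    then show ?thesis by (simp add: piD'_def)
  next
    assume "\<exists>\<nu>. (\<nu> \<in> Inl ` M \<or> \<nu> \<in> Inr ` Vs) \<and> (\<forall>v. piD M Vs VK omK omKs v x = v \<nu>)"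
    then obtain \<nu> where nu: "\<forall>v. piD M Vs VK omK omKs v x = v \<nu>" by blast
    then show ?thesis by (simp add: piD'_def hvec_def algebra_simps)
  qed
  have sfA: "simple_function lebesgue ?A" and sfB: "simple_function lebesgue ?B"
    and sfH: "simple_function lebesgue ?H" and sfC: "simple_function lebesgue ?C"
    and sfW: "simple_function lebesgue ?W" using sf by auto
  have sfpA: "simple_function lebesgue (\<lambda>x. p (?A x))" by (rule simple_function_compose1[OF sfA])
  have sfL: "simple_function lebesgue (\<lambda>x. GA x + (p (?A x) - p 1) * (?B x - ?A x))"
    using sfGA sfpA sfA sfB by auto
  have mono: "J (\<lambda>x. GA x + (p (?A x) - p 1) * (?B x - ?A x)) \<le> J GB"
    unfolding J_def by (rule integral_mono_AE[OF intg[OF sfL] intg[OF sfGB] conv])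
  have "(\<lambda>x. GA x + (p (?A x) - p 1) * (?B x - ?A x)) =
     (\<lambda>x. GA x + ((?B x * ?H x - ?A x * ?H x) - p 1 * (?B x * ?C x - ?A x * ?C x) - (?B x * ?W x - ?A x * ?W x)))"
    using pid by auto
  then have lin: "J (\<lambda>x. GA x + (p (?A x) - p 1) * (?B x - ?A x)) =
      J GA + ((J (\<lambda>x. ?B x * ?H x) - J (\<lambda>x. ?A x * ?H x)) - p 1 * (J (\<lambda>x. ?B x * ?C x) - J (\<lambda>x. ?A x * ?C x))
        - (J (\<lambda>x. ?B x * ?W x) - J (\<lambda>x. ?A x * ?W x)))"
    using sfA sfB sfH sfC sfW sfGA by (simp add: Jadd Jdiff Jcmul)
  have s1: "J (\<lambda>x. ?A x * ?H x) + dt * (\<Sum>K\<in>M. BK_form VK a \<eta> u K (deltaK (hvec p VV u) K) (deltaK (hvec p VV u) K))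
      = J (\<lambda>x. ?B x * ?H x)"
    using scheme[of "hvec p VV u"] by (simp add: SJ)
  have s2: "J (\<lambda>x. ?A x * ?C x) = J (\<lambda>x. ?B x * ?C x)"
  proof -
    have "BK_form VK a \<eta> u K (deltaK (hvec p VV u) K) (deltaK (\<lambda>_. 1) K) = 0" for K
      by (simp add: BK_form_def deltaK_def)
    then show ?thesis using scheme[of "\<lambda>_. 1"] by (simp add: SJ)
  qed
  show ?thesis unfolding EA EB using mono lin s1 s2 by simp
qed

end
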